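(* Let $\varphi\colon\mathcal{M}\to\mathcal{X}$ be a smooth lift that does not satisfy "2 $\Rightarrow$ 1" at $y\in\mathcal{M}$, and let $x=\varphi(y)$. Then $W_y\setminus(\mathrm{T}_x\mathcal{X})^*\neq\emptyset$, and for every $w$ in this set there exists $\alpha>0$ such that, with $f(x')=\langle w,x'\rangle+\tfrac{\alpha}{2}\|x'-x\|^2$, the point $y$ is 2-critical for $g=f\circ\varphi$ but $x$ is not stationary for $f$ on $\mathcal{X}$.
   Context: $\mathcal{E}$ is a finite-dimensional real inner product space, $\mathcal{M}$ a smooth manifold, and $\varphi\colon\mathcal{M}\to\mathcal{E}$ smooth with $\varphi(\mathcal{M})=\mathcal{X}$. Tangent cone: $\mathrm{T}_x\mathcal{X}=\{\lim(x_i-x)/\tau_i: x_i\in\mathcal{X},\tau_i>0,\tau_i\to0\}$; $K^*=\{u:\langle u,v\rangle\ge0\ \forall v\in K\}$; $x$ is stationary for $f$ on $\mathcal{X}$ if $\nabla f(x)\in(\mathrm{T}_x\mathcal{X})^*$. $y$ is 2-critical for $g=f\circ\varphi$ if $(g\circ c)'(0)=0$ and $(g\circ c)''(0)\ge0$ for all smooth curves $c$ in $\mathcal{M}$ with $c(0)=y$. "2 $\Rightarrow$ 1" at $y$: for every twice differentiable $f\colon\mathcal{E}\to\mathbb{R}$, if $y$ is 2-critical for $g$ then $\varphi(y)$ is stationary. $W_y$ is the set of $w\in\mathcal{E}$ for which some twice differentiable $f\colon\mathcal{E}\to\mathbb{R}$ has $\nabla f(x)=w$ and $y$ 2-critical for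 $f\circ\varphi$. *)

theory Defs
  imports "HOL-Analysis.Analysis"
begin

text \<open>F vs is the iterated partial
  derivative along the directions in the list vs (innermost first at the end of the list).\<close>
definition smooth_on :: "'a::euclidean_space set \<Rightarrow> ('a \<Rightarrow> 'b::real_normed_vector) \<Rightarrow> bool" where
  "smooth_on S f \<longleftrightarrow> open S \<and>
     (\<exists>F :: 'a list \<Rightarrow> 'a \<Rightarrow> 'b.
        (\<forall>x\<in>S. F [] x = f x) \<and>
        (\<forall>vs. continuous_on S (F vs)) \<and>
        (\<forall>vs. \<forall>v\<in>Basis. \<forall>x\<in>S.
            ((\<lambda>t. F vs (x + t *\<^sub>R v)) has_vector_derivative F (v # vs) x) (at 0)))"

text \<open>A chart is a pair (U, psi): U open in the manifold, psi a homeomorphism of U onto an open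
  subset of the model space 'r.  The manifold is the whole (Hausdorff, second countable) type 'm.\<close>
definition smooth_atlas :: "('m::{t2_space,second_countable_topology} set \<times> ('m \<Rightarrow> 'r::euclidean_space)) set \<Rightarrow> bool" where
  "smooth_atlas A \<longleftrightarrow>
     (\<forall>(U,\<psi>)\<in>A. open U \<and> open (\<psi> ` U) \<and> homeomorphism U (\<psi> ` U) \<psi> (inv_into U \<psi>)) \<and>
     (\<Union>(U,\<psi>)\<in>A. U) = UNIV \<and>
     (\<forall>(U,\<psi>)\<in>A. \<forall>(V,\<theta>)\<in>A. smooth_on (\<psi> ` (U \<inter> V)) (\<theta> \<circ> inv_into U \<psi>))"

definition smooth_map_mfd :: "('m::topological_space set \<times> ('m \<Rightarrow> 'r::euclidean_space)) set \<Rightarrow> ('m \<Rightarrow> 'e::real_normed_vector) \<Rightarrow> bool" where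
  "smooth_map_mfd A \<phi> \<longleftrightarrow> (\<forall>(U,\<psi>)\<in>A. smooth_on (\<psi> ` U) (\<phi> \<circ> inv_into U \<psi>))"

definition smooth_curve_mfd :: "('m::topological_space set \<times> ('m \<Rightarrow> 'r::euclidean_space)) set \<Rightarrow> real set \<Rightarrow> (real \<Rightarrow> 'm) \<Rightarrow> bool" where
  "smooth_curve_mfd A I c \<longleftrightarrow> open I \<and> continuous_on I c \<and>
     (\<forall>(U,\<psi>)\<in>A. smooth_on (I \<inter> c -` U) (\<psi> \<circ> c))"

definition two_critical :: "('m::topological_space set \<times> ('m \<Rightarrow> 'r::euclidean_space)) set \<Rightarrow> ('m \<Rightarrow> real) \<Rightarrow> 'm \<Rightarrow> bool" where
  "two_critical A g y \<longleftrightarrow>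
     (\<forall>\<epsilon>>0. \<forall>c. smooth_curve_mfd A {-\<epsilon><..<\<epsilon>} c \<and> c 0 = y \<longrightarrow>
        deriv (g \<circ> c) 0 = 0 \<and> deriv (deriv (g \<circ> c)) 0 \<ge> 0)"

definition tangent_cone :: "'e::real_inner set \<Rightarrow> 'e \<Rightarrow> 'e set" where
  "tangent_cone X x = {v. \<exists>xs \<tau>. (\<forall>i. xs i \<in> X) \<and> (\<forall>i. \<tau> i > (0::real)) \<and>
       \<tau> \<longlonglongrightarrow> 0 \<and> (\<lambda>i. (1 / \<tau> i) *\<^sub>R (xs i - x)) \<longlonglongrightarrow> v}"

definition dual_cone :: "'e::real_inner set \<Rightarrow> 'e set" where
  "dual_cone K = {u. \<forall>v\<in>K. inner u v \<ge> 0}"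

definition grad :: "('e::real_inner \<Rightarrow> real) \<Rightarrow> 'e \<Rightarrow> 'e" where
  "grad f x = (SOME g. (f has_derivative (\<lambda>h. inner g h)) (at x))"

definition twice_differentiable :: "('e::euclidean_space \<Rightarrow> real) \<Rightarrow> bool" where
  "twice_differentiable f \<longleftrightarrow> (\<exists>G. (\<forall>x. (f has_derivative (\<lambda>h. inner (G x) h)) (at x)) \<and>
                                  (\<forall>x. G differentiable (at x)))"

definition stationary :: "('e::euclidean_space \<Rightarrow> real) \<Rightarrow> 'e set \<Rightarrow> 'e \<Rightarrow> bool" where
  "stationary f X x \<longleftrightarrow> grad f x \<in> dual_cone (tangent_cone X x)"

definition two_implies_one :: "('m::topological_space set \<times> ('m \<Rightarrow> 'r::euclidean_space)) set \<Rightarrow> ('m \<Rightarrow> 'e::euclidean_space) \<Rightarrow> 'm \<Rightarrow> bool" where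
  "two_implies_one A \<phi> y \<longleftrightarrow>
     (\<forall>f. twice_differentiable f \<longrightarrow> two_critical A (f \<circ> \<phi>) y \<longrightarrow> stationary f (range \<phi>) (\<phi> y))"

definition W_set :: "('m::topological_space set \<times> ('m \<Rightarrow> 'r::euclidean_space)) set \<Rightarrow> ('m \<Rightarrow> 'e::euclidean_space) \<Rightarrow> 'm \<Rightarrow> 'e set" where
  "W_set A \<phi> y = {w. \<exists>f. twice_differentiable f \<and> grad f (\<phi> y) = w \<and> two_critical A (f \<circ> \<phi>) y}"

end

theory Submission
  imports Defs
begin

lemma shift_vd:
  fixes g :: "real \<Rightarrow> 'b::real_normed_vector"
  assumes "((\<lambda>u. g (t + u)) has_vector_derivative v) (at 0)"
  shows "(g has_vector_derivative v) (at t)"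
proof -
  have 1: "((\<lambda>\<tau>. \<tau> - t) has_vector_derivative 1) (at t)"
    by (auto intro!: derivative_eq_intros)
  have 2: "((\<lambda>u. g (t + u)) has_vector_derivative v) (at ((\<lambda>\<tau>. \<tau> - t) t))"
    using assms by simp
  have "(((\<lambda>u. g (t + u)) \<circ> (\<lambda>\<tau>. \<tau> - t)) has_vector_derivative (1 *\<^sub>R v)) (at t)"
    by (rule vector_diff_chain_at[OF 1 2])
  then show ?thesis by (simp add: o_def)
qed

lemma partial_step:
  fixes f :: "'a::euclidean_space \<Rightarrow> 'b::real_normed_vector"
  assumes G: "\<And>z. z \<in> S \<Longrightarrow> ((\<lambda>t. f (z + t *\<^sub>R b)) has_vector_derivative G z) (at 0)"
    and ball: "\<And>t. t \<in> closed_segment 0 s \<Longrightarrow> z + t *\<^sub>R b \<in> S"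
    and bnd: "\<And>t. t \<in> closed_segment 0 s \<Longrightarrow> norm (G (z + t *\<^sub>R b) - Gx) \<le> e"
  shows "norm (f (z + s *\<^sub>R b) - f z - s *\<^sub>R Gx) \<le> \<bar>s\<bar> * (3*e)"
proof -
  define \<phi> where "\<phi> t = f (z + t *\<^sub>R b)" for t
  have d: "(\<phi> has_vector_derivative G (z + t *\<^sub>R b)) (at t within closed_segment 0 s)"
    if "t \<in> closed_segment 0 s" for t
  proof -
    have "((\<lambda>u. f ((z + t *\<^sub>R b) + u *\<^sub>R b)) has_vector_derivative G (z + t *\<^sub>R b)) (at 0)"
      using G[OF ball[OF that]] .
    then have "((\<lambda>u. \<phi> (t + u)) has_vector_derivative G (z + t *\<^sub>R b)) (at 0)"
      by (simp add: \<phi>_def algebra_simps scaleR_add_left)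
    then show ?thesis using shift_vd has_vector_derivative_at_within by blast
  qed
  have 0: "(0::real) \<in> closed_segment 0 s" by simp
  have "norm (\<phi> s - \<phi> 0 - (s - 0) *\<^sub>R G (z + 0 *\<^sub>R b)) \<le> norm (s - 0) * (2*e)"
  proof (rule vector_differentiable_bound_linearization[OF d _ _ 0])
    show "closed_segment 0 s \<subseteq> closed_segment 0 s" by simp
    fix t assume t: "t \<in> closed_segment 0 s"
    have "norm (G (z + t *\<^sub>R b) - G (z + 0 *\<^sub>R b)) \<le> norm (G (z + t *\<^sub>R b) - Gx) + norm (G (z + 0 *\<^sub>R b) - Gx)"
      by (metis norm_triangle_ineq4 diff_diff_eq2 add_diff_cancel_left' diff_add_cancel norm_minus_commute order_refl norm_diff_triangle_ineq)
    also have "\<dots> \<le> 2 * e" using bnd[OF t] bnd[OF 0] by simp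
    finally show "norm (G (z + t *\<^sub>R b) - G (z + 0 *\<^sub>R b)) \<le> 2 * e" .
  qed simp
  then have A: "norm (f (z + s *\<^sub>R b) - f z - s *\<^sub>R G z) \<le> \<bar>s\<bar> * (2*e)"
    by (simp add: \<phi>_def)
  have B: "norm (s *\<^sub>R G z - s *\<^sub>R Gx) \<le> \<bar>s\<bar> * e"
    using bnd[OF 0] by (simp add: scaleR_diff_right[symmetric] mult_left_mono)
  have "norm (f (z + s *\<^sub>R b) - f z - s *\<^sub>R Gx) \<le> norm (f (z + s *\<^sub>R b) - f z - s *\<^sub>R G z) + norm (s *\<^sub>R G z - s *\<^sub>R Gx)"
    by (rule order_trans[OF _ norm_triangle_ineq]) (simp add: algebra_simps)
  then show ?thesis using A B by (simp add: algebra_simps)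
qed

lemma seg_abs: "t \<in> closed_segment 0 (s::real) \<Longrightarrow> \<bar>t\<bar> \<le> \<bar>s\<bar>"
  by (auto simp: closed_segment_eq_real_ivl split: if_splits)

lemma comp_bound:
  fixes h :: "'a::euclidean_space"
  assumes "B \<subseteq> Basis" "finite B" "b \<in> Basis" "b \<notin> B" "\<bar>t\<bar> \<le> \<bar>h \<bullet> b\<bar>"
  shows "norm ((\<Sum>b'\<in>B. (h \<bullet> b') *\<^sub>R b') + t *\<^sub>R b) \<le> norm h"
proof (rule norm_le_componentwise)
  fix i :: 'a assume i: "i \<in> Basis"
  have e: "((\<Sum>b'\<in>B. (h \<bullet> b') *\<^sub>R b') + t *\<^sub>R b) \<bullet> i = (if i \<in> B then h \<bullet> i else 0) + (if i = b then t else 0)"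
  proof -
    have "(\<Sum>b'\<in>B. (h \<bullet> b') *\<^sub>R b') \<bullet> i = (\<Sum>b'\<in>B. (h \<bullet> b') * (if b' = i then 1 else 0))"
      unfolding inner_sum_left using assms(1) i
      by (intro sum.cong) (auto simp: inner_Basis)
    also have "\<dots> = (if i \<in> B then h \<bullet> i else 0)"
      using assms(2) by (simp add: if_distrib sum.delta' cong: if_cong)
    finally show ?thesis using i assms(3) by (auto simp: inner_add_left inner_Basis)
  qed
  show "\<bar>((\<Sum>b'\<in>B. (h \<bullet> b') *\<^sub>R b') + t *\<^sub>R b) \<bullet> i\<bar> \<le> \<bar>h \<bullet> i\<bar>"
    unfolding e using assms(4,5) by auto
qed

lemma partials_induct:
  fixes f :: "'a::euclidean_space \<Rightarrow> 'b::real_normed_vector"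
  assumes S: "open S" "x \<in> S"
    and G: "\<And>b z. b \<in> Basis \<Longrightarrow> z \<in> S \<Longrightarrow> ((\<lambda>t. f (z + t *\<^sub>R b)) has_vector_derivative G b z) (at 0)"
    and cont: "\<And>b. b \<in> Basis \<Longrightarrow> isCont (G b) x"
    and fin: "finite B" "B \<subseteq> Basis"
  shows "\<forall>e>0. \<exists>d>0. \<forall>h. norm h < d \<longrightarrow> norm (f (x + (\<Sum>b'\<in>B. (h \<bullet> b') *\<^sub>R b')) - f x - (\<Sum>b'\<in>B. (h \<bullet> b') *\<^sub>R G b' x)) \<le> e * norm h"
  using fin
proof (induction B rule: finite_induct)
  case empty
  then show ?case by (auto intro: exI[of _ 1])
next
  case (insert b B)
  show ?case
  proof (intro allI impI)
    fix e :: real assume e: "e > 0"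
    from insert have bB: "b \<in> Basis" "B \<subseteq> Basis" by auto
    from insert.IH[OF bB(2)] e obtain d1 where d1: "d1 > 0"
      and H1: "\<And>h. norm h < d1 \<Longrightarrow> norm (f (x + (\<Sum>b'\<in>B. (h \<bullet> b') *\<^sub>R b')) - f x - (\<Sum>b'\<in>B. (h \<bullet> b') *\<^sub>R G b' x)) \<le> e/2 * norm h"
      by (meson half_gt_zero)
    from cont[OF bB(1), unfolded continuous_at_eps_delta] e obtain d2 where d2: "d2 > 0"
      and H2: "\<And>z. dist z x < d2 \<Longrightarrow> dist (G b z) (G b x) < e/6"
      by (metis divide_pos_pos zero_less_numeral)
    from S obtain d3 where d3: "d3 > 0" "ball x d3 \<subseteq> S"
      by (meson open_contains_ball)
    define d where "d = min d1 (min d2 d3)"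
    have "d > 0" using d1 d2 d3 by (simp add: d_def)
    moreover have "norm (f (x + (\<Sum>b'\<in>insert b B. (h \<bullet> b') *\<^sub>R b')) - f x - (\<Sum>b'\<in>insert b B. (h \<bullet> b') *\<^sub>R G b' x)) \<le> e * norm h"
      if h: "norm h < d" for h
    proof -
      define z where "z = x + (\<Sum>b'\<in>B. (h \<bullet> b') *\<^sub>R b')"
      define s where "s = h \<bullet> b"
      have near: "norm (z + t *\<^sub>R b - x) \<le> norm h" if "t \<in> closed_segment 0 s" for t
      proof -
        have "z + t *\<^sub>R b - x = (\<Sum>b'\<in>B. (h \<bullet> b') *\<^sub>R b') + t *\<^sub>R b" by (simp add: z_def)
        also have "norm \<dots> \<le> norm h"
          using comp_bound[OF bB(2) insert(1) bB(1) insert(2)] seg_abs[OF that] by (simp add: s_def)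
        finally show ?thesis .
      qed
      have step: "norm (f (z + s *\<^sub>R b) - f z - s *\<^sub>R G b x) \<le> \<bar>s\<bar> * (3*(e/6))"
      proof (rule partial_step[where S=S and G="G b"])
        show "\<And>z. z \<in> S \<Longrightarrow> ((\<lambda>t. f (z + t *\<^sub>R b)) has_vector_derivative G b z) (at 0)"
          using G[OF bB(1)] .
        fix t assume t: "t \<in> closed_segment 0 s"
        have "dist (z + t *\<^sub>R b) x < d3" "dist (z + t *\<^sub>R b) x < d2"
          using near[OF t] h by (auto simp: d_def dist_norm)
        then show "z + t *\<^sub>R b \<in> S" using d3 by (auto simp: dist_commute)
        show "norm (G b (z + t *\<^sub>R b) - G b x) \<le> e/6"
          using H2[of "z + t *\<^sub>R b"] \<open>dist (z + t *\<^sub>R b) x < d2\<close> by (simp add: dist_norm)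
      qed
      have sh: "\<bar>s\<bar> \<le> norm h" using Basis_le_norm[OF bB(1)] by (simp add: s_def)
      have step': "norm (f (z + s *\<^sub>R b) - f z - s *\<^sub>R G b x) \<le> e/2 * norm h"
        proof -
        have "\<bar>s\<bar> * (3*(e/6)) \<le> norm h * (e/2)" using sh e by (intro mult_mono) auto
        then show ?thesis using step by (simp add: mult.commute)
      qed
      have ih: "norm (f z - f x - (\<Sum>b'\<in>B. (h \<bullet> b') *\<^sub>R G b' x)) \<le> e/2 * norm h"
        using H1[of h] h by (simp add: d_def z_def)
      have eq1: "x + (\<Sum>b'\<in>insert b B. (h \<bullet> b') *\<^sub>R b') = z + s *\<^sub>R b"
        using insert(1,2) by (simp add: z_def s_def algebra_simps)
      have eq2: "(\<Sum>b'\<in>insert b B. (h \<bullet> b') *\<^sub>R G b' x) = s *\<^sub>R G b x + (\<Sum>b'\<in>B. (h \<bullet> b') *\<^sub>R G b' x)"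
        using insert(1,2) by (simp add: s_def)
      have "norm (f (z + s *\<^sub>R b) - f x - (s *\<^sub>R G b x + (\<Sum>b'\<in>B. (h \<bullet> b') *\<^sub>R G b' x)))
          \<le> norm (f (z + s *\<^sub>R b) - f z - s *\<^sub>R G b x) + norm (f z - f x - (\<Sum>b'\<in>B. (h \<bullet> b') *\<^sub>R G b' x))"
        by (rule order_trans[OF _ norm_triangle_ineq]) (simp add: algebra_simps)
      then show ?thesis unfolding eq1 eq2 using step' ih by simp
    qed
    ultimately show "\<exists>d>0. \<forall>h. norm h < d \<longrightarrow> norm (f (x + (\<Sum>b'\<in>insert b B. (h \<bullet> b') *\<^sub>R b')) - f x - (\<Sum>b'\<in>insert b B. (h \<bullet> b') *\<^sub>R G b' x)) \<le> e * norm h"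
      by blast
  qed
qed

lemma partials_C1:
  fixes f :: "'a::euclidean_space \<Rightarrow> 'b::real_normed_vector"
  assumes S: "open S" "x \<in> S"
    and G: "\<And>b z. b \<in> Basis \<Longrightarrow> z \<in> S \<Longrightarrow> ((\<lambda>t. f (z + t *\<^sub>R b)) has_vector_derivative G b z) (at 0)"
    and cont: "\<And>b. b \<in> Basis \<Longrightarrow> isCont (G b) x"
  shows "(f has_derivative (\<lambda>h. \<Sum>b\<in>Basis. (h \<bullet> b) *\<^sub>R G b x)) (at x)"
  unfolding has_derivative_at_alt
proof (intro conjI)
  show "bounded_linear (\<lambda>h. \<Sum>b\<in>Basis. (h \<bullet> b) *\<^sub>R G b x)"
    by (intro bounded_linear_sum bounded_linear_scaleR_const bounded_linear_inner_left)
  have P: "\<forall>e>0. \<exists>d>0. \<forall>h. norm h < d \<longrightarrow> norm (f (x + (\<Sum>b'\<in>Basis. (h \<bullet> b') *\<^sub>R b')) - f x - (\<Sum>b'\<in>Basis. (h \<bullet> b') *\<^sub>R G b' x)) \<le> e * norm h"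
    by (rule partials_induct[OF S G cont]) auto
  show "\<forall>e>0. \<exists>d>0. \<forall>y. norm (y - x) < d \<longrightarrow> norm (f y - f x - (\<Sum>b\<in>Basis. ((y - x) \<bullet> b) *\<^sub>R G b x)) \<le> e * norm (y - x)"
  proof (intro allI impI)
    fix e :: real assume "e > 0"
    with P obtain d where "d > 0" and D: "\<And>h. norm h < d \<Longrightarrow> norm (f (x + (\<Sum>b'\<in>Basis. (h \<bullet> b') *\<^sub>R b')) - f x - (\<Sum>b'\<in>Basis. (h \<bullet> b') *\<^sub>R G b' x)) \<le> e * norm h"
      by blast
    show "\<exists>d>0. \<forall>y. norm (y - x) < d \<longrightarrow> norm (f y - f x - (\<Sum>b\<in>Basis. ((y - x) \<bullet> b) *\<^sub>R G b x)) \<le> e * norm (y - x)"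
    proof (intro exI[of _ d] conjI allI impI)
      fix y assume "norm (y - x) < d"
      from D[OF this] show "norm (f y - f x - (\<Sum>b\<in>Basis. ((y - x) \<bullet> b) *\<^sub>R G b x)) \<le> e * norm (y - x)"
        by (simp add: euclidean_representation)
    qed fact
  qed
qed


lemma shift_vd1:
  fixes g :: "real \<Rightarrow> 'b::real_normed_vector"
  assumes "((\<lambda>u. g (t + u *\<^sub>R 1)) has_vector_derivative v) (at 0)"
  shows "(g has_vector_derivative v) (at t)"
  using assms shift_vd[of g t v] by simp

lemma curve_regular:
  fixes A :: "('m::{t2_space,second_countable_topology} set \<times> ('m \<Rightarrow> 'r::euclidean_space)) set"
    and \<phi> :: "'m \<Rightarrow> 'e::euclidean_space"
  assumes atlas: "smooth_atlas A" and sm: "smooth_map_mfd A \<phi>"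
    and \<epsilon>: "\<epsilon> > 0" and c: "smooth_curve_mfd A {-\<epsilon><..<\<epsilon>} c"
  shows "\<exists>d>0. \<exists>\<gamma>1 \<gamma>2. (\<forall>t. \<bar>t\<bar> < d \<longrightarrow> ((\<phi> \<circ> c) has_vector_derivative \<gamma>1 t) (at t)) \<and>
           (\<gamma>1 has_vector_derivative \<gamma>2) (at 0)"
proof -
  have "c 0 \<in> (\<Union>(U,\<psi>)\<in>A. U)" using atlas unfolding smooth_atlas_def by auto
  then obtain U \<psi> where UA: "(U,\<psi>) \<in> A" and c0: "c 0 \<in> U" by auto
  have hom: "homeomorphism U (\<psi> ` U) \<psi> (inv_into U \<psi>)" and oU: "open (\<psi> ` U)"
    using atlas UA unfolding smooth_atlas_def by auto
  define T where "T = {-\<epsilon><..<\<epsilon>} \<inter> c -` U"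
  have "smooth_on T (\<psi> \<circ> c)" using c UA unfolding smooth_curve_mfd_def T_def by auto
  then have oT: "open T" unfolding smooth_on_def by auto
  from \<open>smooth_on T (\<psi> \<circ> c)\<close> obtain Fb :: "real list \<Rightarrow> real \<Rightarrow> 'r" where
        Fb0': "\<forall>x\<in>T. Fb [] x = (\<psi> \<circ> c) x"
    and Fbd': "\<forall>vs. \<forall>x\<in>T. ((\<lambda>t. Fb vs (x + t *\<^sub>R 1)) has_vector_derivative Fb (1 # vs) x) (at 0)"
    unfolding smooth_on_def Basis_real_def by blast
  have Fb0: "\<And>t. t \<in> T \<Longrightarrow> Fb [] t = \<psi> (c t)" using Fb0' by simp
  have Fbd: "\<And>vs t. t \<in> T \<Longrightarrow> ((\<lambda>s. Fb vs (t + s)) has_vector_derivative Fb (1 # vs) t) (at 0)"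
    using Fbd' by simp
  have "smooth_on (\<psi> ` U) (\<phi> \<circ> inv_into U \<psi>)" using sm UA unfolding smooth_map_mfd_def by auto
  then obtain FP :: "'r list \<Rightarrow> 'r \<Rightarrow> 'e" where
        FP0': "\<forall>z\<in>\<psi> ` U. FP [] z = (\<phi> \<circ> inv_into U \<psi>) z"
    and FPc: "\<And>vs. continuous_on (\<psi> ` U) (FP vs)"
    and FPd': "\<forall>vs. \<forall>v\<in>Basis. \<forall>z\<in>\<psi> ` U. ((\<lambda>t. FP vs (z + t *\<^sub>R v)) has_vector_derivative FP (v # vs) z) (at 0)"
    unfolding smooth_on_def by blast
  have FP0: "\<And>z. z \<in> \<psi> ` U \<Longrightarrow> FP [] z = \<phi> (inv_into U \<psi> z)" using FP0' by (simp only: o_def)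
  have FPd: "\<And>vs v z. v \<in> Basis \<Longrightarrow> z \<in> \<psi> ` U \<Longrightarrow> ((\<lambda>t. FP vs (z + t *\<^sub>R v)) has_vector_derivative FP (v # vs) z) (at 0)"
    using FPd' by blast
  have FPcont: "isCont (FP vs) z" if "z \<in> \<psi> ` U" for vs z
    using FPc[of vs] oU that continuous_on_eq_continuous_at by blast
  have T0: "0 \<in> T" using c0 \<epsilon> by (simp add: T_def)
  have bT: "Fb [] t \<in> \<psi> ` U" if "t \<in> T" for t using that Fb0[OF that] by (auto simp: T_def)
  have FPD: "(FP [] has_derivative (\<lambda>h. \<Sum>b\<in>Basis. (h \<bullet> b) *\<^sub>R FP [b] z)) (at z)" if "z \<in> \<psi> ` U" for z
    by (rule partials_C1[OF oU that]) (auto intro: FPd FPcont that)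
  have FPbD: "FP [b] differentiable (at z)" if "z \<in> \<psi> ` U" "b \<in> Basis" for z b
    unfolding differentiable_def
    by (rule exI, rule partials_C1[OF oU that(1), where G="\<lambda>b'. FP [b', b]"]) (auto intro: FPd FPcont that)
  have FbD: "(Fb vs has_vector_derivative Fb (1 # vs) t) (at t)" if "t \<in> T" for t vs
    by (rule shift_vd[OF Fbd[OF that]])
  define \<gamma>1 where "\<gamma>1 t = (\<Sum>b\<in>Basis. (Fb [1] t \<bullet> b) *\<^sub>R FP [b] (Fb [] t))" for t
  have G1: "((\<phi> \<circ> c) has_vector_derivative \<gamma>1 t) (at t)" if "t \<in> T" for t
  proof -
    have "((\<lambda>x. FP [] (Fb [] x)) has_derivative (\<lambda>s. \<Sum>b\<in>Basis. ((s *\<^sub>R Fb [1] t) \<bullet> b) *\<^sub>R FP [b] (Fb [] t))) (at t)"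
      using has_derivative_compose[OF FbD[OF that, of "[]", unfolded has_vector_derivative_def] FPD[OF bT[OF that]]] .
    then have "((\<lambda>x. FP [] (Fb [] x)) has_vector_derivative \<gamma>1 t) (at t)"
      unfolding has_vector_derivative_def \<gamma>1_def by (simp add: scaleR_sum_right)
    then show ?thesis
    proof (rule has_vector_derivative_transform_within_open[OF _ oT that])
      fix s assume "s \<in> T"
      then show "FP [] (Fb [] s) = (\<phi> \<circ> c) s"
        using FP0[OF bT] Fb0 homeomorphism_apply1[OF hom] by (auto simp: T_def)
    qed
  qed
  obtain d where d: "d > 0" "ball 0 d \<subseteq> T" using oT T0 open_contains_ball by blast
  have "\<gamma>1 differentiable (at 0)"
    unfolding \<gamma>1_def
  proof (intro differentiable_sum ballI differentiable_scaleR differentiable_inner)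
    fix b :: 'r assume b: "b \<in> Basis"
    show "Fb [1] differentiable (at 0)"
      using FbD[OF T0] by (auto simp: vector_derivative_works[symmetric] intro: differentiableI_vector)
    show "(\<lambda>x. b) differentiable (at 0)" by simp
    have "(FP [b] \<circ> Fb []) differentiable (at 0)"
      using FbD[OF T0] FPbD[OF bT[OF T0] b]
      by (intro differentiable_chain_at) (auto intro: differentiableI_vector)
    then show "(\<lambda>x. FP [b] (Fb [] x)) differentiable (at 0)" by (simp add: o_def)
  qed simp
  then have "(\<gamma>1 has_vector_derivative vector_derivative \<gamma>1 (at 0)) (at 0)"
    using vector_derivative_works by blast
  moreover have "\<forall>t. \<bar>t\<bar> < d \<longrightarrow> ((\<phi> \<circ> c) has_vector_derivative \<gamma>1 t) (at t)"
    using d G1 by (auto simp: subset_iff)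
  ultimately show ?thesis using d by blast
qed


lemma curve_second:
  fixes F :: "'e::euclidean_space \<Rightarrow> real" and \<gamma> :: "real \<Rightarrow> 'e"
  assumes FG: "\<And>z. (F has_derivative (\<lambda>h. GF z \<bullet> h)) (at z)"
    and GH: "(GF has_derivative HF) (at (\<gamma> 0))"
    and d: "d > 0"
    and \<gamma>d: "\<And>t. \<bar>t\<bar> < d \<Longrightarrow> (\<gamma> has_vector_derivative \<gamma>1 t) (at t)"
    and \<gamma>1d: "(\<gamma>1 has_vector_derivative \<gamma>2) (at 0)"
  shows "deriv (F \<circ> \<gamma>) 0 = GF (\<gamma> 0) \<bullet> \<gamma>1 0 \<and>
         deriv (deriv (F \<circ> \<gamma>)) 0 = HF (\<gamma>1 0) \<bullet> \<gamma>1 0 + GF (\<gamma> 0) \<bullet> \<gamma>2"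
proof -
  have D1: "((F \<circ> \<gamma>) has_field_derivative GF (\<gamma> t) \<bullet> \<gamma>1 t) (at t)" if "\<bar>t\<bar> < d" for t
  proof -
    have "((\<lambda>x. F (\<gamma> x)) has_derivative (\<lambda>s. GF (\<gamma> t) \<bullet> (s *\<^sub>R \<gamma>1 t))) (at t)"
      using has_derivative_compose[OF \<gamma>d[OF that, unfolded has_vector_derivative_def] FG] .
    moreover have "(\<lambda>s. GF (\<gamma> t) \<bullet> (s *\<^sub>R \<gamma>1 t)) = (*) (GF (\<gamma> t) \<bullet> \<gamma>1 t)"
      by (auto simp: mult.commute)
    ultimately show ?thesis unfolding has_field_derivative_def by (simp add: o_def)
  qed
  have dd: "deriv (F \<circ> \<gamma>) t = GF (\<gamma> t) \<bullet> \<gamma>1 t" if "\<bar>t\<bar> < d" for t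
    using DERIV_imp_deriv[OF D1[OF that]] .
  have lin: "linear HF" using GH has_derivative_linear by blast
  have g1: "((\<lambda>t. GF (\<gamma> t)) has_derivative (\<lambda>s. s *\<^sub>R HF (\<gamma>1 0))) (at 0)"
  proof -
    have "((\<lambda>t. GF (\<gamma> t)) has_derivative (\<lambda>s. HF (s *\<^sub>R \<gamma>1 0))) (at 0)"
      using has_derivative_compose[OF \<gamma>d[OF _, unfolded has_vector_derivative_def] GH] d by simp
    then show ?thesis using linear_scale[OF lin] by simp
  qed
  have g2: "(\<gamma>1 has_derivative (\<lambda>s. s *\<^sub>R \<gamma>2)) (at 0)" using \<gamma>1d by (simp add: has_vector_derivative_def)
  have D2: "((\<lambda>t. GF (\<gamma> t) \<bullet> \<gamma>1 t) has_field_derivative HF (\<gamma>1 0) \<bullet> \<gamma>1 0 + GF (\<gamma> 0) \<bullet> \<gamma>2) (at 0)"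
  proof -
    have "((\<lambda>t. GF (\<gamma> t) \<bullet> \<gamma>1 t) has_derivative (\<lambda>s. GF (\<gamma> 0) \<bullet> (s *\<^sub>R \<gamma>2) + (s *\<^sub>R HF (\<gamma>1 0)) \<bullet> \<gamma>1 0)) (at 0)"
      using has_derivative_inner[OF g1 g2] .
    moreover have "(\<lambda>s. GF (\<gamma> 0) \<bullet> (s *\<^sub>R \<gamma>2) + (s *\<^sub>R HF (\<gamma>1 0)) \<bullet> \<gamma>1 0) = (*) (HF (\<gamma>1 0) \<bullet> \<gamma>1 0 + GF (\<gamma> 0) \<bullet> \<gamma>2)"
      by (auto simp: algebra_simps)
    ultimately show ?thesis unfolding has_field_derivative_def by simp
  qed
  have ev: "eventually (\<lambda>t. deriv (F \<circ> \<gamma>) t = GF (\<gamma> t) \<bullet> \<gamma>1 t) (nhds 0)"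
  proof -
    have "eventually (\<lambda>t. t \<in> ball 0 d) (nhds (0::real))"
      using d by (intro eventually_nhds_in_open) auto
    then show ?thesis by eventually_elim (auto intro!: dd)
  qed
  have "DERIV (deriv (F \<circ> \<gamma>)) 0 :> HF (\<gamma>1 0) \<bullet> \<gamma>1 0 + GF (\<gamma> 0) \<bullet> \<gamma>2"
    using DERIV_cong_ev[OF refl ev refl] D2 by simp
  then show ?thesis using dd d DERIV_imp_deriv by auto
qed

lemma grad_eq:
  fixes f :: "'e::real_inner \<Rightarrow> real"
  assumes "(f has_derivative (\<lambda>h. g \<bullet> h)) (at x)"
  shows "grad f x = g"
proof -
  have "(f has_derivative (\<lambda>h. grad f x \<bullet> h)) (at x)"
    unfolding grad_def using someI[of "\<lambda>g. (f has_derivative (\<lambda>h. g \<bullet> h)) (at x)", OF assms] .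
  from has_derivative_unique[OF this assms]
  have "\<And>h. grad f x \<bullet> h = g \<bullet> h" by metis
  from this[of "grad f x - g"] have "(grad f x - g) \<bullet> (grad f x - g) = 0"
    by (simp add: inner_diff_left inner_diff_right inner_commute)
  then show ?thesis by simp
qed

theorem corollary3p18:
  fixes A :: "('m::{t2_space,second_countable_topology} set \<times> ('m \<Rightarrow> 'r::euclidean_space)) set"
    and \<phi> :: "'m \<Rightarrow> 'e::euclidean_space"
    and y :: 'm
  assumes "smooth_atlas A"
    and "smooth_map_mfd A \<phi>"
    and "\<not> two_implies_one A \<phi> y"
  shows "W_set A \<phi> y - dual_cone (tangent_cone (range \<phi>) (\<phi> y)) \<noteq> {} \<and>
         (\<forall>w \<in> W_set A \<phi> y - dual_cone (tangent_cone (range \<phi>) (\<phi> y)).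
            \<exists>\<alpha>>0. two_critical A ((\<lambda>x'. inner w x' + \<alpha> / 2 * (norm (x' - \<phi> y))\<^sup>2) \<circ> \<phi>) y \<and>
                   \<not> stationary (\<lambda>x'. inner w x' + \<alpha> / 2 * (norm (x' - \<phi> y))\<^sup>2) (range \<phi>) (\<phi> y))"
proof
  show "W_set A \<phi> y - dual_cone (tangent_cone (range \<phi>) (\<phi> y)) \<noteq> {}"
  proof -
    from assms(3) obtain f where "twice_differentiable f" "two_critical A (f \<circ> \<phi>) y"
      "\<not> stationary f (range \<phi>) (\<phi> y)"
      unfolding two_implies_one_def by blast
    then have "grad f (\<phi> y) \<in> W_set A \<phi> y - dual_cone (tangent_cone (range \<phi>) (\<phi> y))"
      unfolding W_set_def stationary_def by blast
    then show ?thesis by blast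
  qed
  show "\<forall>w \<in> W_set A \<phi> y - dual_cone (tangent_cone (range \<phi>) (\<phi> y)).
            \<exists>\<alpha>>0. two_critical A ((\<lambda>x'. inner w x' + \<alpha> / 2 * (norm (x' - \<phi> y))\<^sup>2) \<circ> \<phi>) y \<and>
                   \<not> stationary (\<lambda>x'. inner w x' + \<alpha> / 2 * (norm (x' - \<phi> y))\<^sup>2) (range \<phi>) (\<phi> y)"
  proof
    fix w assume w: "w \<in> W_set A \<phi> y - dual_cone (tangent_cone (range \<phi>) (\<phi> y))"
    define x0 where "x0 = \<phi> y"
    from w obtain f0 where tf: "twice_differentiable f0" and gw: "grad f0 x0 = w"
      and crit0: "two_critical A (f0 \<circ> \<phi>) y"
      unfolding W_set_def x0_def by blast
    from tf obtain G where FG: "\<And>z. (f0 has_derivative (\<lambda>h. G z \<bullet> h)) (at z)"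
      and Gd: "\<And>z. G differentiable (at z)"
      unfolding twice_differentiable_def by blast
    have Gx: "G x0 = w" using grad_eq[OF FG] gw by simp
    from Gd[of x0] obtain H where GH: "(G has_derivative H) (at x0)"
      unfolding differentiable_def by blast
    have blH: "bounded_linear H" using GH has_derivative_bounded_linear by blast
    define \<alpha> where "\<alpha> = onorm H + 1"
    have \<alpha>: "\<alpha> > 0" using onorm_pos_le[OF blH] by (simp add: \<alpha>_def)
    define f where "f = (\<lambda>x'. inner w x' + \<alpha> / 2 * (norm (x' - x0))\<^sup>2)"
    define Gf where "Gf z = w + \<alpha> *\<^sub>R (z - x0)" for z
    have fG: "(f has_derivative (\<lambda>h. Gf z \<bullet> h)) (at z)" for z
    proof -
      have f_eq: "f = (\<lambda>x'. inner w x' + \<alpha> / 2 * ((x' - x0) \<bullet> (x' - x0)))"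
        unfolding f_def by (simp add: power2_norm_eq_inner)
      show ?thesis unfolding f_eq Gf_def
        by (rule derivative_eq_intros refl | simp)+ (rule ext, simp add: field_simps inner_diff_left inner_diff_right inner_add_left inner_add_right inner_commute)
    qed
    have GfH: "(Gf has_derivative (\<lambda>h. \<alpha> *\<^sub>R h)) (at z)" for z
      unfolding Gf_def by (auto intro!: derivative_eq_intros)
    have nst: "\<not> stationary f (range \<phi>) x0"
      using w grad_eq[OF fG[of x0]] unfolding stationary_def by (simp add: Gf_def x0_def)
    have tc: "two_critical A (f \<circ> \<phi>) y"
      unfolding two_critical_def
    proof (intro allI impI)
      fix \<epsilon> :: real and c assume \<epsilon>: "\<epsilon> > 0" and cc: "smooth_curve_mfd A {-\<epsilon><..<\<epsilon>} c \<and> c 0 = y"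
      from curve_regular[OF assms(1,2) \<epsilon>] cc obtain d \<gamma>1 \<gamma>2 where d: "d > 0"
        and g1: "\<And>t. \<bar>t\<bar> < d \<Longrightarrow> ((\<phi> \<circ> c) has_vector_derivative \<gamma>1 t) (at t)"
        and g2: "(\<gamma>1 has_vector_derivative \<gamma>2) (at 0)" by blast
      have c0: "(\<phi> \<circ> c) 0 = x0" using cc by (simp add: x0_def)
      from crit0 \<epsilon> cc have cr: "deriv (f0 \<circ> (\<phi> \<circ> c)) 0 = 0" "deriv (deriv (f0 \<circ> (\<phi> \<circ> c))) 0 \<ge> 0"
        unfolding two_critical_def by (simp_all add: o_assoc)
      have GH': "(G has_derivative H) (at ((\<phi> \<circ> c) 0))" using GH c0 by simp
      note S0 = curve_second[OF FG GH' d g1 g2]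
      have GfH': "(Gf has_derivative (\<lambda>h. \<alpha> *\<^sub>R h)) (at ((\<phi> \<circ> c) 0))" by (rule GfH)
      note S1 = curve_second[OF fG GfH' d g1 g2]
      define v where "v = \<gamma>1 0"
      have wv: "w \<bullet> v = 0" using S0 cr c0 Gx by (simp add: v_def)
      have h0: "H v \<bullet> v + w \<bullet> \<gamma>2 \<ge> 0" using S0 cr c0 Gx by (simp add: v_def)
      have "H v \<bullet> v \<le> norm (H v) * norm v" by (rule norm_cauchy_schwarz)
      also have "\<dots> \<le> onorm H * norm v * norm v"
        by (intro mult_right_mono onorm[OF blH]) simp
      also have "\<dots> \<le> \<alpha> * (v \<bullet> v)"
        by (simp add: \<alpha>_def algebra_simps power2_norm_eq_inner[symmetric] power2_eq_square)
      finally have "\<alpha> * (v \<bullet> v) + w \<bullet> \<gamma>2 \<ge> 0" using h0 by linarith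
      then show "deriv (f \<circ> \<phi> \<circ> c) 0 = 0 \<and> 0 \<le> deriv (deriv (f \<circ> \<phi> \<circ> c)) 0"
        using S1 c0 wv by (simp add: o_assoc Gf_def v_def)
    qed
    show "\<exists>\<alpha>>0. two_critical A ((\<lambda>x'. inner w x' + \<alpha> / 2 * (norm (x' - \<phi> y))\<^sup>2) \<circ> \<phi>) y \<and>
                   \<not> stationary (\<lambda>x'. inner w x' + \<alpha> / 2 * (norm (x' - \<phi> y))\<^sup>2) (range \<phi>) (\<phi> y)"
      using \<alpha> tc nst unfolding f_def x0_def by blast
  qed
qed

end
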